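(* Fix an assignment matrix $A$ for which event $\mathcal A$ holds, and let $Q$ be the $m\times m$ matrix with $Q_{ij}=B_{ij}/d$ for $i\ne j$ and $Q_{ii}=1-\frac1d\sum_{k\ne i}B_{ik}$, where $d=\frac32mnp^2$. Then $Q$ is a symmetric stochastic matrix (reversible with respect to the uniform distribution) and $$\mu^*(Q)\ \ge\ \frac13 .$$
   Context: $A\in\{0,1\}^{n\times m}$ is an assignment matrix ($n$ users, $m\ge2$ items), $p\in(0,1]$, $B=A^\top A$. Event $\mathcal A$: $\frac12np^2\le B_{ij}\le\frac32np^2$ for all $i\ne j\in[m]$. For a stochastic matrix $M$ reversible with respect to a positive probability vector (so its eigenvalues are real, $1=\lambda_1\ge\lambda_2\ge\dots\ge\lambda_m$), the spectral gap is $\mu^*(M)=1-\max\{|\lambda_2|,|\lambda_m|\}$. *)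

theory Defs
  imports "Jordan_Normal_Form.Char_Poly" "HOL-Library.Multiset"
begin

(* A is an n x m matrix with 0/1 entries (n users, m items) *)
definition assignment_matrix :: "real mat \<Rightarrow> nat \<Rightarrow> nat \<Rightarrow> bool" where
  "assignment_matrix A n m \<longleftrightarrow> A \<in> carrier_mat n m \<and>
     (\<forall>u<n. \<forall>i<m. A $$ (u,i) \<in> {0,1})"

definition co_occ :: "real mat \<Rightarrow> real mat" where
  "co_occ A = transpose_mat A * A"

definition event_A :: "real mat \<Rightarrow> nat \<Rightarrow> nat \<Rightarrow> real \<Rightarrow> bool" where
  "event_A A n m p \<longleftrightarrow> (\<forall>i<m. \<forall>j<m. i \<noteq> j \<longrightarrow>
      (1/2) * real n * p^2 \<le> co_occ A $$ (i,j) \<and> co_occ A $$ (i,j) \<le> (3/2) * real n * p^2)"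

definition Q_mat :: "real mat \<Rightarrow> nat \<Rightarrow> nat \<Rightarrow> real \<Rightarrow> real mat" where
  "Q_mat A n m p = (let d = (3/2) * real m * real n * p^2 in
     mat m m (\<lambda>(i,j). if i = j then 1 - (1/d) * (\<Sum>k\<in>{0..<m}-{i}. co_occ A $$ (i,k))
                       else co_occ A $$ (i,j) / d))"

definition stochastic_mat :: "real mat \<Rightarrow> bool" where
  "stochastic_mat M \<longleftrightarrow> square_mat M \<and>
     (\<forall>i<dim_row M. \<forall>j<dim_row M. 0 \<le> M $$ (i,j)) \<and>
     (\<forall>i<dim_row M. (\<Sum>j<dim_row M. M $$ (i,j)) = 1)"

definition reversible_wrt :: "real mat \<Rightarrow> (nat \<Rightarrow> real) \<Rightarrow> bool" where
  "reversible_wrt M \<pi> \<longleftrightarrow> (\<forall>i<dim_row M. \<forall>j<dim_row M. \<pi> i * M $$ (i,j) = \<pi> j * M $$ (j,i))"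

definition eigenvalues_desc :: "real mat \<Rightarrow> real list" where
  "eigenvalues_desc M = rev (sorted_list_of_multiset (proots (char_poly M)))"

(* \<mu>*(M) = 1 - max{|\<lambda>_2|, |\<lambda>_m|}, where m = dim M (list indices are 0-based) *)
definition spectral_gap :: "real mat \<Rightarrow> real" where
  "spectral_gap M = (let ev = eigenvalues_desc M; m = dim_row M in
     1 - max \<bar>ev ! 1\<bar> \<bar>ev ! (m - 1)\<bar>)"

end

theory Submission
  imports Defs
begin


lemma qf_identity:
  fixes w :: "nat \<Rightarrow> nat \<Rightarrow> real" and x :: "nat \<Rightarrow> real"
  assumes sym: "\<And>k j. k < m \<Longrightarrow> j < m \<Longrightarrow> w k j = w j k" and d: "d \<noteq> 0"
  defines "W \<equiv> \<lambda>k j. if k = j then 0 else w k j"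
  shows "(\<Sum>k<m. \<Sum>j<m. (if k = j then 1 - (1/d) * (\<Sum>l\<in>{0..<m}-{k}. w k l) else w k j / d) * x k * x j)
     = (\<Sum>k<m. x k ^ 2) - (1/(2*d)) * (\<Sum>k<m. \<Sum>j<m. W k j * (x k - x j)^2)"
proof -
  have rs: "(\<Sum>l\<in>{0..<m}-{k}. w k l) = (\<Sum>l<m. W k l)" if "k < m" for k
  proof -
    have "(\<Sum>l<m. W k l) = (\<Sum>l\<in>{0..<m}-{k}. W k l) + W k k"
      using that by (subst sum.remove[of _ k]) (auto simp: lessThan_atLeast0 add.commute)
    also have "\<dots> = (\<Sum>l\<in>{0..<m}-{k}. w k l)" by (simp add: W_def)
    finally show ?thesis by simp
  qed
  have "(\<Sum>k<m. \<Sum>j<m. (if k = j then 1 - (1/d) * (\<Sum>l\<in>{0..<m}-{k}. w k l) else w k j / d) * x k * x j)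
      = (\<Sum>k<m. \<Sum>j<m. (if k = j then x k ^ 2 else 0) - (if k = j then (\<Sum>l<m. W k l) * x k ^ 2 / d else 0) + W k j * x k * x j / d)"
    by (intro sum.cong refl) (auto simp: rs W_def power2_eq_square field_simps)
  also have "\<dots> = (\<Sum>k<m. x k ^ 2) - (1/d) * (\<Sum>k<m. \<Sum>j<m. W k j * x k ^ 2) + (1/d) * (\<Sum>k<m. \<Sum>j<m. W k j * x k * x j)"
    by (simp add: sum.distrib sum_subtractf sum_distrib_left sum_divide_distrib sum_distrib_right field_simps)
  finally have e1: "(\<Sum>k<m. \<Sum>j<m. (if k = j then 1 - (1/d) * (\<Sum>l\<in>{0..<m}-{k}. w k l) else w k j / d) * x k * x j)
     = (\<Sum>k<m. x k ^ 2) - (1/d) * (\<Sum>k<m. \<Sum>j<m. W k j * x k ^ 2) + (1/d) * (\<Sum>k<m. \<Sum>j<m. W k j * x k * x j)" .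
  have sw: "(\<Sum>k<m. \<Sum>j<m. W k j * x j ^ 2) = (\<Sum>k<m. \<Sum>j<m. W k j * x k ^ 2)"
    by (subst sum.swap) (intro sum.cong refl, auto simp: W_def sym)
  have "(\<Sum>k<m. \<Sum>j<m. W k j * (x k - x j)^2) = (\<Sum>k<m. \<Sum>j<m. W k j * x k ^ 2 + W k j * x j ^ 2 - 2 * (W k j * x k * x j))"
    by (intro sum.cong refl) (simp add: power2_eq_square algebra_simps)
  also have "\<dots> = 2 * (\<Sum>k<m. \<Sum>j<m. W k j * x k ^ 2) - 2 * (\<Sum>k<m. \<Sum>j<m. W k j * x k * x j)"
    using sw by (simp add: sum.distrib sum_subtractf sum_distrib_left)
  finally have e2: "(\<Sum>k<m. \<Sum>j<m. W k j * (x k - x j)^2) = 2 * (\<Sum>k<m. \<Sum>j<m. W k j * x k ^ 2) - 2 * (\<Sum>k<m. \<Sum>j<m. W k j * x k * x j)" .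
  show ?thesis unfolding e1 e2 using d by (simp add: field_simps)
qed

lemma sq_diff_sum:
  fixes x :: "nat \<Rightarrow> real"
  shows "(\<Sum>k<m. \<Sum>j<m. (x k - x j)^2) = 2 * real m * (\<Sum>k<m. x k ^ 2) - 2 * (\<Sum>k<m. x k)^2"
proof -
  have "(\<Sum>k<m. \<Sum>j<m. (x k - x j)^2) = (\<Sum>k<m. \<Sum>j<m. x k ^ 2 + x j ^ 2 - 2 * (x k * x j))"
    by (intro sum.cong refl) (simp add: power2_eq_square algebra_simps)
  also have "\<dots> = 2 * real m * (\<Sum>k<m. x k ^ 2) - 2 * (\<Sum>k<m. \<Sum>j<m. x k * x j)"
    by (simp add: sum.distrib sum_subtractf sum_distrib_left algebra_simps)
  also have "(\<Sum>k<m. \<Sum>j<m. x k * x j) = (\<Sum>k<m. x k)^2"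
    by (simp add: power2_eq_square sum_product)
  finally show ?thesis .
qed

lemma qf_bounds:
  fixes w :: "nat \<Rightarrow> nat \<Rightarrow> real" and x :: "nat \<Rightarrow> real"
  assumes sym: "\<And>k j. k < m \<Longrightarrow> j < m \<Longrightarrow> w k j = w j k" and c: "0 < c" and m: "m \<ge> 1"
    and bnd: "\<And>k j. k < m \<Longrightarrow> j < m \<Longrightarrow> k \<noteq> j \<Longrightarrow> c/2 \<le> w k j \<and> w k j \<le> 3/2 * c"
    and d: "d = 3/2 * real m * c"
    and s0: "(\<Sum>k<m. x k) = 0"
  shows "0 \<le> (\<Sum>k<m. \<Sum>j<m. (if k = j then 1 - (1/d) * (\<Sum>l\<in>{0..<m}-{k}. w k l) else w k j / d) * x k * x j)"
    and "(\<Sum>k<m. \<Sum>j<m. (if k = j then 1 - (1/d) * (\<Sum>l\<in>{0..<m}-{k}. w k l) else w k j / d) * x k * x j)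
         \<le> 2/3 * (\<Sum>k<m. x k ^ 2)"
proof -
  define W where "W = (\<lambda>k j. if k = j then 0 else w k j)"
  have mpos: "real m > 0" using m by simp
  have dpos: "d > 0" unfolding d using c mpos by simp
  have id: "(\<Sum>k<m. \<Sum>j<m. (if k = j then 1 - (1/d) * (\<Sum>l\<in>{0..<m}-{k}. w k l) else w k j / d) * x k * x j)
     = (\<Sum>k<m. x k ^ 2) - (1/(2*d)) * (\<Sum>k<m. \<Sum>j<m. W k j * (x k - x j)^2)"
    unfolding W_def by (rule qf_identity) (use sym dpos in auto)
  define N where "N = (\<Sum>k<m. x k ^ 2)"
  have T: "(\<Sum>k<m. \<Sum>j<m. (x k - x j)^2) = 2 * real m * N" using sq_diff_sum[of x m] s0 N_def by simp
  have lo: "c/2 * (\<Sum>k<m. \<Sum>j<m. (x k - x j)^2) \<le> (\<Sum>k<m. \<Sum>j<m. W k j * (x k - x j)^2)"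
    unfolding sum_distrib_left
  proof (intro sum_mono)
    fix k j assume kj: "k \<in> {..<m}" "j \<in> {..<m}"
    show "c/2 * (x k - x j)^2 \<le> W k j * (x k - x j)^2"
    proof (cases "k = j")
      case False
      then show ?thesis using bnd[of k j] kj by (intro mult_right_mono) (auto simp: W_def)
    qed (simp add: W_def)
  qed
  have hi: "(\<Sum>k<m. \<Sum>j<m. W k j * (x k - x j)^2) \<le> 3/2 * c * (\<Sum>k<m. \<Sum>j<m. (x k - x j)^2)"
    unfolding sum_distrib_left
  proof (intro sum_mono)
    fix k j assume kj: "k \<in> {..<m}" "j \<in> {..<m}"
    show "W k j * (x k - x j)^2 \<le> 3/2 * c * (x k - x j)^2"
    proof (cases "k = j")
      case False
      then show ?thesis using bnd[of k j] kj by (intro mult_right_mono) (auto simp: W_def)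
    qed (simp add: W_def)
  qed
  have N0: "N \<ge> 0" unfolding N_def by (intro sum_nonneg) auto
  define S where "S = (\<Sum>k<m. \<Sum>j<m. W k j * (x k - x j)^2)"
  have lo': "c * real m * N \<le> S" using lo T unfolding S_def by (simp add: algebra_simps)
  have hi': "S \<le> 3 * c * real m * N" using hi T unfolding S_def by (simp add: algebra_simps)
  have "1/(2*d) * S \<le> N" using hi' dpos d c m by (simp add: field_simps)
  then show "0 \<le> (\<Sum>k<m. \<Sum>j<m. (if k = j then 1 - (1/d) * (\<Sum>l\<in>{0..<m}-{k}. w k l) else w k j / d) * x k * x j)"
    unfolding id S_def[symmetric] N_def[symmetric] by simp
  have "N/3 \<le> 1/(2*d) * S" using lo' dpos d c m by (simp add: field_simps)
  then show "(\<Sum>k<m. \<Sum>j<m. (if k = j then 1 - (1/d) * (\<Sum>l\<in>{0..<m}-{k}. w k l) else w k j / d) * x k * x j)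
         \<le> 2/3 * (\<Sum>k<m. x k ^ 2)"
    unfolding id S_def[symmetric] N_def[symmetric] by simp
qed

lemma complex_eig_real:
  fixes q :: "nat \<Rightarrow> nat \<Rightarrow> real" and v :: "nat \<Rightarrow> complex"
  assumes sym: "\<And>k j. k < m \<Longrightarrow> j < m \<Longrightarrow> q k j = q j k"
    and qb: "\<And>x. (\<Sum>k<m. x k) = 0 \<Longrightarrow> 0 \<le> (\<Sum>k<m. \<Sum>j<m. q k j * x k * x j) \<and>
               (\<Sum>k<m. \<Sum>j<m. q k j * x k * x j) \<le> 2/3 * (\<Sum>k<m. x k ^ 2)"
    and s0: "(\<Sum>k<m. v k) = 0"
    and nz: "i < m" "v i \<noteq> 0"
    and ev: "\<And>k. k < m \<Longrightarrow> (\<Sum>j<m. of_real (q k j) * v j) = lam * v k"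
  shows "\<exists>r. lam = of_real r \<and> 0 \<le> r \<and> r \<le> 2/3"
proof -
  define a where "a = (\<lambda>k. Re (v k))"
  define b where "b = (\<lambda>k. Im (v k))"
  have sa: "(\<Sum>k<m. a k) = 0" using arg_cong[OF s0, of Re] by (simp add: a_def Re_sum)
  have sb: "(\<Sum>k<m. b k) = 0" using arg_cong[OF s0, of Im] by (simp add: b_def Im_sum)
  define qf where "qf = (\<lambda>x. (\<Sum>k<m. \<Sum>j<m. q k j * x k * x j))"
  define N where "N = (\<Sum>k<m. a k ^ 2 + b k ^ 2)"
  have Npos: "N > 0"
  proof -
    have "a i ^ 2 + b i ^ 2 > 0" using nz by (auto simp: a_def b_def complex_eq_iff sum_power2_gt_zero_iff)
    moreover have "N \<ge> a i ^ 2 + b i ^ 2" unfolding N_def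
      by (rule member_le_sum) (use nz in auto)
    ultimately show ?thesis by simp
  qed
  define Z where "Z = (\<Sum>k<m. \<Sum>j<m. of_real (q k j) * (cnj (v k) * v j))"
  have "Z = (\<Sum>k<m. cnj (v k) * (\<Sum>j<m. of_real (q k j) * v j))"
    unfolding Z_def by (simp add: sum_distrib_left mult_ac)
  also have "\<dots> = (\<Sum>k<m. lam * (cnj (v k) * v k))" by (intro sum.cong refl) (simp add: ev)
  also have "\<dots> = (\<Sum>k<m. lam * of_real (a k ^ 2 + b k ^ 2))"
    by (intro sum.cong refl) (simp add: a_def b_def complex_mult_cnj mult.commute)
  also have "\<dots> = lam * of_real N"
    by (simp add: sum_distrib_left N_def)
  finally have Z1: "Z = lam * of_real N" .
  have "Re Z = (\<Sum>k<m. \<Sum>j<m. q k j * (a k * a j + b k * b j))"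
    unfolding Z_def by (simp add: Re_sum a_def b_def)
  also have "\<dots> = qf a + qf b" unfolding qf_def
    by (simp add: sum.distrib[symmetric] algebra_simps)
  finally have ReZ: "Re Z = qf a + qf b" .
  have "Im Z = (\<Sum>k<m. \<Sum>j<m. q k j * (a k * b j)) - (\<Sum>k<m. \<Sum>j<m. q k j * (b k * a j))"
    unfolding Z_def by (simp add: Im_sum a_def b_def sum_subtractf[symmetric] algebra_simps)
  also have "(\<Sum>k<m. \<Sum>j<m. q k j * (b k * a j)) = (\<Sum>k<m. \<Sum>j<m. q k j * (a k * b j))"
    by (subst sum.swap) (intro sum.cong refl, auto simp: sym mult_ac)
  finally have ImZ: "Im Z = 0" by simp
  have "lam = of_real ((qf a + qf b) / N)"
    using Z1 ReZ ImZ Npos by (simp add: complex_eq_iff field_simps)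
  moreover have "0 \<le> (qf a + qf b) / N" "(qf a + qf b) / N \<le> 2/3"
  proof -
    have A: "0 \<le> qf a" "qf a \<le> 2/3 * (\<Sum>k<m. a k ^ 2)" using qb[OF sa] unfolding qf_def by auto
    have B: "0 \<le> qf b" "qf b \<le> 2/3 * (\<Sum>k<m. b k ^ 2)" using qb[OF sb] unfolding qf_def by auto
    have NN: "N = (\<Sum>k<m. a k ^ 2) + (\<Sum>k<m. b k ^ 2)" unfolding N_def by (simp add: sum.distrib)
    show "0 \<le> (qf a + qf b) / N" using A B Npos by simp
    show "(qf a + qf b) / N \<le> 2/3" using A B Npos unfolding NN by (simp add: field_simps)
  qed
  ultimately show ?thesis by blast
qed



lemma mult_entry:
  assumes "A \<in> carrier_mat m k" "B \<in> carrier_mat k m'" "i < m" "j < m'"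
  shows "(A * B) $$ (i,j) = (\<Sum>l<k. A $$ (i,l) * B $$ (l,j))"
  using assms by (simp add: scalar_prod_def lessThan_atLeast0 row_def col_def)

lemma sum_if_eq:
  fixes x y :: "'a::comm_ring_1"
  shows "(\<Sum>l<n. (if l = a then x else y)) = (if a < n then x - y else 0) + of_nat n * y"
proof -
  have "(\<Sum>l<n. (if l = a then x else y)) = (\<Sum>l<n. (if l = a then x - y else 0) + y)"
    by (intro sum.cong refl) auto
  also have "\<dots> = (if a < n then x - y else 0) + of_nat n * y"
    by (simp add: sum.distrib sum.delta' mult.commute)
  finally show ?thesis .
qed

lemma ite_mult: "(if P then 1 else 0) * (x::'a::ring_1) = (if P then x else 0)" by simp

lemma ite_div: "(if P then 1 else 0) / (x::'a::field) = (if P then 1 / x else 0)" by simp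
lemma ite_neg: "- (if P then a else 0) = (if P then - a else (0::'a::ring_1))" by simp

lemma mult_ite: "(x::'a::ring_1) * (if P then 1 else 0) = (if P then x else 0)" by simp

lemma ST_inv:
  fixes n :: nat
  defines "S \<equiv> mat (Suc n) (Suc n) (\<lambda>(k,j). if j = 0 then 1 else if k = j then 1 else if k = 0 then -1 else 0 :: real)"
    and "T \<equiv> mat (Suc n) (Suc n) (\<lambda>(k,j). if k = 0 then 1 / real (Suc n) else if k = j then 1 - 1 / real (Suc n) else - 1 / real (Suc n))"
  shows "S * T = 1\<^sub>m (Suc n)"
proof (rule eq_matI)
  fix i j assume i: "i < dim_row (1\<^sub>m (Suc n) :: real mat)" and j: "j < dim_col (1\<^sub>m (Suc n) :: real mat)"
  have "(S * T) $$ (i,j) = (\<Sum>l<Suc n. S $$ (i,l) * T $$ (l,j))"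
    using i j by (intro mult_entry) (auto simp: S_def T_def)
  also have "\<dots> = S $$ (i,0) * T $$ (0,j) + (\<Sum>l<n. S $$ (i,Suc l) * T $$ (Suc l,j))"
    by (subst sum.lessThan_Suc_shift) simp
  also have "\<dots> = 1\<^sub>m (Suc n) $$ (i,j)"
  proof (cases i)
    case 0
    then show ?thesis using j
      apply (cases j)
      apply (auto simp: S_def T_def sum_negf sum_if_eq field_simps)
      done
  next
    case (Suc i')
    then show ?thesis using i j
      by (cases j) (auto simp: S_def T_def ite_mult ite_div ite_neg sum.delta sum_if_eq)
  qed
  finally show "(S * T) $$ (i,j) = 1\<^sub>m (Suc n) $$ (i,j)" .
qed (auto simp: S_def T_def)

lemma char_poly_split:
  fixes Q :: "real mat" and n :: nat
  assumes Q: "Q \<in> carrier_mat (Suc n) (Suc n)"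
    and sym: "\<And>i j. i < Suc n \<Longrightarrow> j < Suc n \<Longrightarrow> Q $$ (i,j) = Q $$ (j,i)"
    and rows: "\<And>i. i < Suc n \<Longrightarrow> (\<Sum>j<Suc n. Q $$ (i,j)) = 1"
  defines "R \<equiv> mat n n (\<lambda>(i,j). Q $$ (Suc i, Suc j) - Q $$ (Suc i, 0))"
  shows "char_poly Q = [:-1,1:] * char_poly R"
proof -
  define S where "S = mat (Suc n) (Suc n) (\<lambda>(k,j). if j = 0 then 1 else if k = j then 1 else if k = 0 then -1 else 0 :: real)"
  define T where "T = mat (Suc n) (Suc n) (\<lambda>(k,j). if k = 0 then 1 / real (Suc n) else if k = j then 1 - 1 / real (Suc n) else - 1 / real (Suc n))"
  define M where "M = four_block_mat (1\<^sub>m 1) (0\<^sub>m 1 n) (0\<^sub>m n 1) R"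
  have R: "R \<in> carrier_mat n n" unfolding R_def by simp
  have S: "S \<in> carrier_mat (Suc n) (Suc n)" and T: "T \<in> carrier_mat (Suc n) (Suc n)"
    unfolding S_def T_def by auto
  have M: "M \<in> carrier_mat (Suc n) (Suc n)" unfolding M_def using R by auto
  have ST: "S * T = 1\<^sub>m (Suc n)" unfolding S_def T_def by (rule ST_inv)
  have TS: "T * S = 1\<^sub>m (Suc n)" by (rule mat_mult_left_right_inverse[OF S T ST])
  have Ment: "M $$ (i,j) = (if i = 0 then (if j = 0 then 1 else 0) else if j = 0 then 0 else R $$ (i-1,j-1))"
    if "i < Suc n" "j < Suc n" for i j
    using that R unfolding M_def by (subst index_mat_four_block) auto
  have cols: "Q $$ (0,j) + (\<Sum>l<n. Q $$ (Suc l, j)) = 1" if "j < Suc n" for j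
  proof -
    have "(\<Sum>l<Suc n. Q $$ (l,j)) = (\<Sum>l<Suc n. Q $$ (j,l))" using that by (intro sum.cong refl) (auto simp: sym)
    also have "\<dots> = 1" using rows that by simp
    finally show ?thesis by (subst (asm) sum.lessThan_Suc_shift) simp
  qed
  have QS: "Q * S = S * M"
  proof (rule eq_matI)
    fix i j assume i: "i < dim_row (S * M)" and j: "j < dim_col (S * M)"
    then have i: "i < Suc n" and j: "j < Suc n" using S M by auto
    have "(Q * S) $$ (i,j) = (\<Sum>l<Suc n. Q $$ (i,l) * S $$ (l,j))"
      using i j Q S by (intro mult_entry) auto
    also have "\<dots> = Q $$ (i,0) * S $$ (0,j) + (\<Sum>l<n. Q $$ (i,Suc l) * S $$ (Suc l,j))"
      by (subst sum.lessThan_Suc_shift) simp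
    also have "\<dots> = (if j = 0 then 1 else Q $$ (i,j) - Q $$ (i,0))"
    proof (cases j)
      case 0
      have "Q $$ (i,0) + (\<Sum>l<n. Q $$ (i,Suc l)) = 1" using rows[OF i] by (subst (asm) sum.lessThan_Suc_shift) simp
      then show ?thesis using 0 by (simp add: S_def)
    next
      case (Suc j')
      have "(\<Sum>l<n. Q $$ (i,Suc l) * S $$ (Suc l,j)) = (\<Sum>l<n. if l = j' then Q $$ (i,Suc l) else 0)"
        using j Suc by (intro sum.cong refl) (auto simp: S_def)
      then show ?thesis using j Suc by (simp add: S_def sum.delta)
    qed
    also have "\<dots> = S $$ (i,0) * M $$ (0,j) + (\<Sum>l<n. S $$ (i,Suc l) * M $$ (Suc l,j))"
    proof (cases j)
      case 0
      then show ?thesis using i by (simp add: S_def Ment)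
    next
      case (Suc j')
      show ?thesis
      proof (cases i)
        case 0
        have "(\<Sum>l<n. S $$ (i,Suc l) * M $$ (Suc l,j)) = - (\<Sum>l<n. Q $$ (Suc l, j) - Q $$ (Suc l, 0))"
          using Suc 0 j by (simp add: S_def Ment R_def sum_negf[symmetric])
        also have "\<dots> = Q $$ (0,j) - Q $$ (0,0)" using cols[OF j] cols[of 0] by (simp add: sum_subtractf)
        finally show ?thesis using Suc 0 j by (simp add: S_def Ment)
      next
        case (Suc i')
        then show ?thesis using \<open>j = Suc j'\<close> i j
          by (simp add: S_def Ment R_def ite_mult sum.delta)
      qed
    qed
    also have "\<dots> = (\<Sum>l<Suc n. S $$ (i,l) * M $$ (l,j))"
      by (subst sum.lessThan_Suc_shift) simp
    also have "\<dots> = (S * M) $$ (i,j)"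
      using i j M S by (intro mult_entry[symmetric]) auto
    finally show "(Q * S) $$ (i,j) = (S * M) $$ (i,j)" .
  qed (use Q S M in auto)
  have "Q = Q * (S * T)" using Q ST by simp
  also have "\<dots> = (Q * S) * T" using Q S T by (simp add: assoc_mult_mat)
  also have "\<dots> = S * M * T" unfolding QS ..
  finally have QSMT: "Q = S * M * T" .
  have "similar_mat Q M" by (rule similar_matI[OF _ ST TS QSMT]) (use Q S T M in auto)
  then have "char_poly Q = char_poly M" by (rule char_poly_similar)
  also have "\<dots> = char_poly (1\<^sub>m 1) * char_poly R" unfolding M_def
    by (rule char_poly_four_block_zeros_col) (use R in auto)
  also have "char_poly (1\<^sub>m 1 :: real mat) = [:-1,1:]"
    by (subst char_poly_upper_triangular[of _ 1]) (auto simp: diag_mat_def upper_triangular_def)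
  finally show ?thesis .
qed




lemma lift_eig:
  fixes Q :: "nat \<Rightarrow> nat \<Rightarrow> real" and v :: "nat \<Rightarrow> complex"
  assumes cols: "\<And>j. j < Suc n \<Longrightarrow> Q 0 j + (\<Sum>l<n. Q (Suc l) j) = 1"
    and ev: "\<And>i. i < n \<Longrightarrow> (\<Sum>j<n. of_real (Q (Suc i) (Suc j) - Q (Suc i) 0) * v j) = lam * v i"
  defines "u \<equiv> (\<lambda>k. if k = 0 then - (\<Sum>i<n. v i) else v (k - 1))"
  shows "\<And>k. k < Suc n \<Longrightarrow> (\<Sum>j<Suc n. of_real (Q k j) * u j) = lam * u k"
    and "(\<Sum>k<Suc n. u k) = 0"
proof -
  show "(\<Sum>k<Suc n. u k) = 0" unfolding u_def by (subst sum.lessThan_Suc_shift) simp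
  fix k assume k: "k < Suc n"
  have "(\<Sum>j<Suc n. of_real (Q k j) * u j) = of_real (Q k 0) * u 0 + (\<Sum>j<n. of_real (Q k (Suc j)) * v j)"
    by (subst sum.lessThan_Suc_shift) (simp add: u_def)
  also have "\<dots> = (\<Sum>j<n. of_real (Q k (Suc j) - Q k 0) * v j)"
    by (simp add: u_def sum_distrib_left sum_distrib_right sum_subtractf algebra_simps sum_negf)
  finally have e: "(\<Sum>j<Suc n. of_real (Q k j) * u j) = (\<Sum>j<n. of_real (Q k (Suc j) - Q k 0) * v j)" .
  show "(\<Sum>j<Suc n. of_real (Q k j) * u j) = lam * u k"
  proof (cases k)
    case (Suc k')
    then show ?thesis using e ev[of k'] k by (simp add: u_def)
  next
    case 0
    have c: "Q 0 (Suc j) - Q 0 0 = - (\<Sum>l<n. Q (Suc l) (Suc j) - Q (Suc l) 0)" if "j < n" for j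
      using cols[of "Suc j"] cols[of 0] that by (simp add: sum_subtractf)
    have "(\<Sum>j<n. of_real (Q 0 (Suc j) - Q 0 0) * v j)
        = - (\<Sum>j<n. \<Sum>l<n. of_real (Q (Suc l) (Suc j) - Q (Suc l) 0) * v j)"
    proof -
      have "(\<Sum>j<n. of_real (Q 0 (Suc j) - Q 0 0) * v j)
        = (\<Sum>j<n. - (\<Sum>l<n. of_real (Q (Suc l) (Suc j) - Q (Suc l) 0) * v j))"
        by (intro sum.cong refl) (simp only: c lessThan_iff of_real_minus of_real_sum sum_distrib_right mult_minus_left)
      then show ?thesis by (simp only: sum_negf)
    qed
    also have "\<dots> = - (\<Sum>l<n. \<Sum>j<n. of_real (Q (Suc l) (Suc j) - Q (Suc l) 0) * v j)"
      by (subst sum.swap) simp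
    also have "\<dots> = - (\<Sum>l<n. lam * v l)" using ev by (metis (no_types, lifting) lessThan_iff sum.cong)
    also have "\<dots> = lam * u 0" by (simp add: u_def sum_distrib_left)
    finally show ?thesis using e 0 by simp
  qed
qed




lemma sum_list_singletons: "sum_list (map (\<lambda>b. {#b#}) bs) = mset bs"
  by (induction bs) auto

lemma spectral_part:
  fixes Q :: "real mat" and n1 :: nat
  assumes Q: "Q \<in> carrier_mat (Suc n1) (Suc n1)" and n1: "n1 \<ge> 1"
    and sym: "\<And>i j. i < Suc n1 \<Longrightarrow> j < Suc n1 \<Longrightarrow> Q $$ (i,j) = Q $$ (j,i)"
    and rows: "\<And>i. i < Suc n1 \<Longrightarrow> (\<Sum>j<Suc n1. Q $$ (i,j)) = 1"
    and qb: "\<And>x. (\<Sum>k<Suc n1. x k) = 0 \<Longrightarrow> 0 \<le> (\<Sum>k<Suc n1. \<Sum>j<Suc n1. Q $$ (k,j) * x k * x j) \<and>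
               (\<Sum>k<Suc n1. \<Sum>j<Suc n1. Q $$ (k,j) * x k * x j) \<le> 2/3 * (\<Sum>k<Suc n1. x k ^ 2)"
  shows "spectral_gap Q \<ge> 1/3"
proof -
  define R where "R = mat n1 n1 (\<lambda>(i,j). Q $$ (Suc i, Suc j) - Q $$ (Suc i, 0))"
  have cpQ: "char_poly Q = [:-1,1:] * char_poly R"
    unfolding R_def by (rule char_poly_split[OF Q sym rows])
  have R: "R \<in> carrier_mat n1 n1" unfolding R_def by simp
  define Rc where "Rc = map_mat complex_of_real R"
  have Rc: "Rc \<in> carrier_mat n1 n1" unfolding Rc_def using R by simp
  have cpRc: "char_poly Rc = map_poly of_real (char_poly R)"
    unfolding Rc_def by (rule of_real_hom.char_poly_hom[OF R])
  obtain as where as: "char_poly Rc = (\<Prod>a\<leftarrow>as. [:- a, 1:])" and las: "length as = n1"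
    using char_poly_factorized[OF Rc] by blast
  have cols: "Q $$ (0,j) + (\<Sum>l<n1. Q $$ (Suc l, j)) = 1" if "j < Suc n1" for j
  proof -
    have "(\<Sum>l<Suc n1. Q $$ (l,j)) = (\<Sum>l<Suc n1. Q $$ (j,l))" using that by (intro sum.cong refl) (auto simp: sym)
    also have "\<dots> = 1" using rows that by simp
    finally show ?thesis by (subst (asm) sum.lessThan_Suc_shift) simp
  qed
  have roots: "\<exists>r. a = of_real r \<and> 0 \<le> r \<and> r \<le> 2/3" if a: "a \<in> set as" for a
  proof -
    have "poly (char_poly Rc) a = 0" unfolding as by (rule linear_poly_root[OF a])
    then have "eigenvalue Rc a" using eigenvalue_root_char_poly[OF Rc] by simp
    then obtain v where "eigenvector Rc v a" unfolding eigenvalue_def by blast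
    then have v: "v \<in> carrier_vec n1" and v0: "v \<noteq> 0\<^sub>v n1" and ev: "Rc *\<^sub>v v = a \<cdot>\<^sub>v v"
      unfolding eigenvector_def using Rc by auto
    have evi: "(\<Sum>j<n1. of_real (Q $$ (Suc i, Suc j) - Q $$ (Suc i, 0)) * v $ j) = a * v $ i" if i: "i < n1" for i
    proof -
      have "(Rc *\<^sub>v v) $ i = a * v $ i" using ev i v by simp
      moreover have "(Rc *\<^sub>v v) $ i = (\<Sum>j<n1. of_real (Q $$ (Suc i, Suc j) - Q $$ (Suc i, 0)) * v $ j)"
        using i v Rc by (simp add: Rc_def R_def scalar_prod_def lessThan_atLeast0 row_def)
      ultimately show ?thesis by simp
    qed
    obtain i where i: "i < n1" "v $ i \<noteq> 0"
    proof -
      have "\<not> (\<forall>i<n1. v $ i = 0)"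
      proof
        assume "\<forall>i<n1. v $ i = 0"
        then have "v = 0\<^sub>v n1" using v by (intro eq_vecI) auto
        then show False using v0 by simp
      qed
      then show ?thesis using that by blast
    qed
    define u where "u = (\<lambda>k. if k = 0 then - (\<Sum>i<n1. v $ i) else v $ (k - 1))"
    have P1: "\<And>j. j < Suc n1 \<Longrightarrow> (\<lambda>k j. Q $$ (k,j)) 0 j + (\<Sum>l<n1. (\<lambda>k j. Q $$ (k,j)) (Suc l) j) = 1"
      using cols by simp
    have P2: "\<And>i. i < n1 \<Longrightarrow> (\<Sum>j<n1. of_real ((\<lambda>k j. Q $$ (k,j)) (Suc i) (Suc j) - (\<lambda>k j. Q $$ (k,j)) (Suc i) 0) * (\<lambda>j. v $ j) j) = a * (\<lambda>j. v $ j) i"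
      using evi by simp
    note L = lift_eig[OF P1 P2]
    have L1: "\<And>k. k < Suc n1 \<Longrightarrow> (\<Sum>j<Suc n1. complex_of_real (Q $$ (k,j)) * u j) = a * u k"
      using L(1) by (simp add: u_def)
    have L2: "(\<Sum>k<Suc n1. u k) = 0"
      using L(2) by (simp add: u_def)
    show ?thesis
      by (rule complex_eig_real[of "Suc n1" "\<lambda>k j. Q $$ (k,j)" u "Suc i"])
         (use sym qb L1 L2 i in \<open>auto simp: u_def\<close>)
  qed
  define bs where "bs = map Re as"
  have asbs: "as = map of_real bs" unfolding bs_def using roots
    by (induction as) (auto, metis Re_complex_of_real)
  have bsb: "0 \<le> b \<and> b \<le> 2/3" if bmem: "b \<in> set bs" for b
  proof -
    obtain x where x: "x \<in> set as" "b = Re x" using bmem unfolding bs_def by auto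
    obtain r where "x = of_real r" "0 \<le> r" "r \<le> 2/3" using roots[OF x(1)] by blast
    then show ?thesis using x by simp
  qed
  interpret ofr: map_poly_inj_comm_ring_hom "of_real :: real \<Rightarrow> complex" ..
  have "map_poly of_real (char_poly R) = map_poly (of_real :: real \<Rightarrow> complex) (\<Prod>b\<leftarrow>bs. [:- b, 1:])"
    unfolding cpRc[symmetric] as asbs ofr.hom_prod_list by (simp add: o_def)
  then have cpR: "char_poly R = (\<Prod>b\<leftarrow>bs. [:- b, 1:])" by simp
  have nz: "(\<Prod>b\<leftarrow>bs. [:- b, 1:]) \<noteq> (0 :: real poly)"
    by (auto simp: prod_list_zero_iff)
  have "proots (char_poly Q) = proots [:-1,1:] + proots (\<Prod>b\<leftarrow>bs. [:- b, 1:])"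
    unfolding cpQ cpR by (rule proots_mult) (use nz in auto)
  also have "proots (\<Prod>b\<leftarrow>bs. [:- b, 1:]) = mset bs"
  proof -
    have "proots (\<Prod>b\<leftarrow>bs. [:- b, 1:]) = sum_list (map proots (map (\<lambda>b. [:- b, 1:]) bs))"
      by (subst proots_prod_list[symmetric]) (auto simp: o_def)
    also have "\<dots> = mset bs" by (simp add: o_def proots_linear_factor sum_list_singletons)
    finally show ?thesis .
  qed
  finally have pr: "proots (char_poly Q) = mset (bs @ [1])" by (simp add: proots_linear_factor)
  have srt: "sort (bs @ [1]) = sort bs @ [1]"
  proof (rule properties_for_sort)
    have "\<forall>x\<in>set bs. x \<le> 1" using bsb by force
    then show "sorted (sort bs @ [1])" by (simp add: sorted_append)
  qed simp
  have evd: "eigenvalues_desc Q = 1 # rev (sort bs)"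
    unfolding eigenvalues_desc_def pr sorted_list_of_multiset_mset srt by simp
  have lbs: "length bs = n1" unfolding bs_def using las by simp
  have dQ: "dim_row Q = Suc n1" using Q by simp
  have e1: "eigenvalues_desc Q ! 1 \<in> set bs"
    unfolding evd using lbs n1 by (metis One_nat_def length_greater_0_conv length_rev length_sort less_le_trans nth_Cons_Suc nth_mem set_rev set_sort zero_less_one_class.zero_le_one le_less_trans not_one_le_zero zero_less_iff_neq_zero)
  have e2: "eigenvalues_desc Q ! (Suc n1 - 1) \<in> set bs"
  proof -
    obtain k where k: "n1 = Suc k" using n1 by (cases n1) auto
    have "eigenvalues_desc Q ! (Suc n1 - 1) = rev (sort bs) ! k" unfolding evd k by simp
    also have "\<dots> \<in> set (rev (sort bs))" by (rule nth_mem) (use lbs k in simp)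
    finally show ?thesis by simp
  qed
  show ?thesis unfolding spectral_gap_def Let_def dQ
    using bsb[OF e1] bsb[OF e2] by (simp add: max_def)
qed




theorem mainTheorem8:
  fixes A :: "real mat" and n m :: nat and p :: real
  assumes "n \<ge> 1" and "m \<ge> 2"
    and "0 < p" and "p \<le> 1"
    and "assignment_matrix A n m"
    and "event_A A n m p"
  shows "Q_mat A n m p = transpose_mat (Q_mat A n m p)
       \<and> stochastic_mat (Q_mat A n m p)
       \<and> reversible_wrt (Q_mat A n m p) (\<lambda>_. 1 / real m)
       \<and> spectral_gap (Q_mat A n m p) \<ge> 1/3"
proof -
  note n = assms(1) and m = assms(2) and p = assms(3)
  have Acar: "A \<in> carrier_mat n m" using assms(5) unfolding assignment_matrix_def by simp
  define B where "B = co_occ A"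
  define c where "c = real n * p^2"
  define d where "d = (3/2) * real m * real n * p^2"
  have cpos: "c > 0" unfolding c_def using n p by simp
  have dc: "d = 3/2 * real m * c" unfolding d_def c_def by simp
  have dpos: "d > 0" unfolding dc using cpos m by simp
  have Bent: "B $$ (i,j) = (\<Sum>u<n. A $$ (u,i) * A $$ (u,j))" if "i < m" "j < m" for i j
    unfolding B_def co_occ_def using Acar that by (subst mult_entry[of _ m n _ m]) auto
  have Bsym: "B $$ (i,j) = B $$ (j,i)" if "i < m" "j < m" for i j
    using that by (simp add: Bent mult.commute)
  have Bbnd: "c/2 \<le> B $$ (i,j) \<and> B $$ (i,j) \<le> 3/2 * c" if "i < m" "j < m" "i \<noteq> j" for i j
    using assms(6) that unfolding event_A_def B_def c_def by (auto simp: mult.assoc)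
  define qf where "qf = (\<lambda>i j. if i = j then 1 - (1/d) * (\<Sum>k\<in>{0..<m}-{i}. B $$ (i,k)) else B $$ (i,j) / d)"
  define Q where "Q = Q_mat A n m p"
  have Qcar: "Q \<in> carrier_mat m m" unfolding Q_def Q_mat_def Let_def by simp
  have Qe: "Q $$ (i,j) = qf i j" if "i < m" "j < m" for i j
    using that unfolding Q_def Q_mat_def Let_def qf_def d_def B_def by simp
  have Qsym: "Q $$ (i,j) = Q $$ (j,i)" if "i < m" "j < m" for i j
    using that by (simp add: Qe qf_def Bsym)
  have rowsum: "(\<Sum>j<m. Q $$ (i,j)) = 1" if i: "i < m" for i
  proof -
    have "(\<Sum>j<m. Q $$ (i,j)) = (\<Sum>j<m. qf i j)" using i by (simp add: Qe)
    also have "\<dots> = qf i i + (\<Sum>j\<in>{..<m}-{i}. qf i j)"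
      using i by (subst sum.remove[of _ i]) auto
    also have "(\<Sum>j\<in>{..<m}-{i}. qf i j) = (\<Sum>j\<in>{0..<m}-{i}. B $$ (i,j) / d)"
      by (intro sum.cong) (auto simp: qf_def lessThan_atLeast0)
    also have "\<dots> = (1/d) * (\<Sum>j\<in>{0..<m}-{i}. B $$ (i,j))" by (simp add: sum_divide_distrib)
    finally show ?thesis by (simp add: qf_def)
  qed
  have nonneg: "0 \<le> Q $$ (i,j)" if "i < m" "j < m" for i j
  proof (cases "i = j")
    case False
    then show ?thesis using that Bbnd[of i j] cpos dpos by (simp add: Qe qf_def)
  next
    case True
    have "(\<Sum>k\<in>{0..<m}-{i}. B $$ (i,k)) \<le> of_nat (card ({0..<m}-{i})) * (3/2 * c)"
      by (rule sum_bounded_above) (use Bbnd that in auto)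
    also have "card ({0..<m}-{i}) = m - 1" using that by simp
    also have "real (m - 1) * (3/2 * c) \<le> d" unfolding dc using cpos m by (simp add: of_nat_diff)
    finally have "(1/d) * (\<Sum>k\<in>{0..<m}-{i}. B $$ (i,k)) \<le> 1" using dpos by (simp add: field_simps)
    then show ?thesis using True that by (simp add: Qe qf_def)
  qed
  have c1: "Q = transpose_mat Q"
    by (rule eq_matI) (use Qcar Qsym in auto)
  have c2: "stochastic_mat Q"
    unfolding stochastic_mat_def using Qcar nonneg rowsum by auto
  have c3: "reversible_wrt Q (\<lambda>_. 1 / real m)"
    unfolding reversible_wrt_def using Qcar Qsym by auto
  obtain n1 where mn1: "m = Suc n1" and n1: "n1 \<ge> 1" using m by (cases m) auto
  have qb: "0 \<le> (\<Sum>k<Suc n1. \<Sum>j<Suc n1. Q $$ (k,j) * x k * x j) \<and>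
               (\<Sum>k<Suc n1. \<Sum>j<Suc n1. Q $$ (k,j) * x k * x j) \<le> 2/3 * (\<Sum>k<Suc n1. x k ^ 2)"
    if s0: "(\<Sum>k<Suc n1. x k) = 0" for x
  proof -
    have eq: "(\<Sum>k<m. \<Sum>j<m. Q $$ (k,j) * x k * x j) = (\<Sum>k<m. \<Sum>j<m. qf k j * x k * x j)"
      by (intro sum.cong refl) (simp add: Qe)
    note qbs = qf_bounds[of m "\<lambda>i j. B $$ (i,j)" c d x, OF Bsym cpos _ Bbnd dc]
    show ?thesis using qbs s0 m eq unfolding mn1[symmetric] qf_def by auto
  qed
  have c4: "spectral_gap Q \<ge> 1/3"
    by (rule spectral_part[of Q n1]) (use Qcar Qsym rowsum qb n1 mn1 in auto)
  show ?thesis using c1 c2 c3 c4 unfolding Q_def by blast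
qed


end
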